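(* Let $\tau\in(0,1)$ and $k\ge1$, and define $$\alpha_k^\tau=\sup_{0\le s\le1}\Big(s-\frac{s}{\tau}+\frac{\mathbb{E}[\min\{\mathrm{Pois}(sk),k\}]}{\tau k}\Big).$$ For every $\tau$-bounded simultaneous offering instance $I$ with $k$ positions there is $s\in[0,1]$ with $R_{\mathsf{ALG}^{s}_{\mathtt{sim}}}(I)\ge\alpha_k^\tau\,\mathrm{LP}_{\mathtt{sim}}(I)$; since $\mathsf{ALG}^s_{\mathtt{sim}}$ randomizes between two value-ordered policies, the best value-ordered policy has expected reward at least $\alpha_k^\tau\,\mathsf{OPT}_{\mathtt{sim}}(I)$.
   Context: Simultaneous offering problem: integers $1\le k\le n$; candidates with acceptance probabilities $p_i\in[0,1]$ and values $v_i\ge0$, labeled $v_1\ge\cdots\ge v_n$; a policy sends offers simultaneously to a (possibly random) set $S$; acceptances independent with probabilities $p_i$; reward $\sum_{i\in A}v_i-\max\{|A|-k,0\}$ for acceptor set $A$; $R_\pi(I)$ expected reward, $\mathsf{OPT}_{\mathtt{sim}}(I)$ its maximum. Value-ordered policy: offers to $S=\{1,\dots,m\}$ for some $m$. $\tau$-bounded: $v_i\ge\tau$ for all $i$. $V_{\mathrm{high}}=\{i:v_i>1\}$. $\mathrm{LP}_{\mathtt{sim}}(I)$: maximize $\sum_iv_ip_iy_i+z$ s.t. $z\le k-\sum_ip_iy_i$, $z\le0$, $0\le y_i\le1$. $\mathsf{ALG}^s_{\mathtt{sim}}$: take an optimal prefix-form solution $y$ of $\mathrm{LP}_{\mathtt{sim}}$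 ($y_i=1$ for $i<j$, $0$ for $i>j$) with total mass $\sum_iy_ip_i$ equal to $\min\{k,\sum_ip_i\}$ if $\sum_{i\in V_{\mathrm{high}}}p_i\le k$ and to $\sum_{i\in V_{\mathrm{high}}}p_i$ otherwise; set $\kappa=s\sum_iy_ip_i$, take $y'=(1,\dots,1,\theta,0,\dots,0)$ with $\sum_iy'_ip_i=\kappa$, and offer to each $i$ independently with probability $y'_i$. *)

theory Defs
  imports "HOL-Probability.Probability"
begin

(* Candidates are indexed 0..<n (paper: 1..n). p i = acceptance probability,
   v i = value. *)

text \<open>E[min(Pois(lam), k)], written out as the Poisson series (the library
  poisson_pmf requires rate > 0, but s = 0 must be allowed).\<close>
definition pois_min_mean :: "real \<Rightarrow> nat \<Rightarrow> real" where
  "pois_min_mean lam k = (\<Sum>j. real (min j k) * (lam ^ j / fact j * exp (- lam)))"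

definition alpha_k_tau :: "nat \<Rightarrow> real \<Rightarrow> real" where
  "alpha_k_tau k \<tau> =
     (SUP s\<in>{0..1::real}. s - s / \<tau> + pois_min_mean (s * real k) k / (\<tau> * real k))"

definition reward :: "nat \<Rightarrow> (nat \<Rightarrow> real) \<Rightarrow> nat set \<Rightarrow> real" where
  "reward k v A = (\<Sum>i\<in>A. v i) - max (real (card A) - real k) 0"

definition det_reward :: "nat \<Rightarrow> (nat \<Rightarrow> real) \<Rightarrow> (nat \<Rightarrow> real) \<Rightarrow> nat set \<Rightarrow> real" where
  "det_reward k p v S =
     (\<Sum>A\<in>Pow S. (\<Prod>i\<in>A. p i) * (\<Prod>i\<in>S - A. 1 - p i) * reward k v A)"

definition policy_reward ::
  "nat \<Rightarrow> (nat \<Rightarrow> real) \<Rightarrow> (nat \<Rightarrow> real) \<Rightarrow> nat set pmf \<Rightarrow> real" where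
  "policy_reward k p v \<pi> = measure_pmf.expectation \<pi> (\<lambda>S. det_reward k p v S)"

definition valid_policy :: "nat \<Rightarrow> nat set pmf \<Rightarrow> bool" where
  "valid_policy n \<pi> \<longleftrightarrow> (\<forall>S\<in>set_pmf \<pi>. S \<subseteq> {0..<n})"

definition OPT_sim :: "nat \<Rightarrow> nat \<Rightarrow> (nat \<Rightarrow> real) \<Rightarrow> (nat \<Rightarrow> real) \<Rightarrow> real" where
  "OPT_sim n k p v = (SUP \<pi>\<in>{\<pi>. valid_policy n \<pi>}. policy_reward k p v \<pi>)"

definition LP_sim :: "nat \<Rightarrow> nat \<Rightarrow> (nat \<Rightarrow> real) \<Rightarrow> (nat \<Rightarrow> real) \<Rightarrow> real" where
  "LP_sim n k p v = Sup {(\<Sum>i<n. v i * p i * y i) + z | y z.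
       (\<forall>i<n. 0 \<le> y i \<and> y i \<le> 1) \<and> z \<le> real k - (\<Sum>i<n. p i * y i) \<and> z \<le> 0}"

definition indep_offer :: "nat \<Rightarrow> (nat \<Rightarrow> real) \<Rightarrow> nat set pmf" where
  "indep_offer n y =
     map_pmf (\<lambda>f. {i\<in>{0..<n}. f i}) (Pi_pmf {0..<n} False (\<lambda>i. bernoulli_pmf (y i)))"

definition prefix_form :: "nat \<Rightarrow> (nat \<Rightarrow> real) \<Rightarrow> bool" where
  "prefix_form n y \<longleftrightarrow> (\<exists>j \<theta>. 0 \<le> \<theta> \<and> \<theta> \<le> 1 \<and>
      (\<forall>i<n. y i = (if i < j then 1 else if i = j then \<theta> else 0)))"

text \<open>Total mass of the optimal prefix-form LP solution used by ALG^s_sim.\<close>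
definition alg_mass :: "nat \<Rightarrow> nat \<Rightarrow> (nat \<Rightarrow> real) \<Rightarrow> (nat \<Rightarrow> real) \<Rightarrow> real" where
  "alg_mass n k p v =
     (if (\<Sum>i\<in>{i. i < n \<and> v i > 1}. p i) \<le> real k
      then min (real k) (\<Sum>i<n. p i)
      else (\<Sum>i\<in>{i. i < n \<and> v i > 1}. p i))"

definition alg_offer_vec ::
  "nat \<Rightarrow> nat \<Rightarrow> (nat \<Rightarrow> real) \<Rightarrow> (nat \<Rightarrow> real) \<Rightarrow> real \<Rightarrow> (nat \<Rightarrow> real) \<Rightarrow> bool" where
  "alg_offer_vec n k p v s y' \<longleftrightarrow> prefix_form n y' \<and>
     (\<Sum>i<n. y' i * p i) = s * alg_mass n k p v"

end

theory Submission
  imports Defs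
begin

no_notation Infinite_Sum.abs_summable_on (infixr "abs'_summable'_on" 46)


definition EBI :: "nat set \<Rightarrow> (nat \<Rightarrow> real) \<Rightarrow> (nat set \<Rightarrow> real) \<Rightarrow> real" where
  "EBI I q g = (\<Sum>A\<in>Pow I. (\<Prod>i\<in>A. q i) * (\<Prod>i\<in>I - A. 1 - q i) * g A)"

lemma EBI_empty[simp]: "EBI {} q g = g {}"
  by (simp add: EBI_def)

lemma EBI_insert:
  assumes fin: "finite I" and a: "a \<notin> I"
  shows "EBI (insert a I) q g = EBI I q (\<lambda>A. (1 - q a) * g A + q a * g (insert a A))"
proof -
  have disj: "Pow I \<inter> insert a ` Pow I = {}" using a by auto
  have inj: "inj_on (insert a) (Pow I)" using a by (auto simp: inj_on_def) 
  have "EBI (insert a I) q g = (\<Sum>A\<in>Pow I. (\<Prod>i\<in>A. q i) * (\<Prod>i\<in>insert a I - A. 1 - q i) * g A)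
      + (\<Sum>A\<in>insert a ` Pow I. (\<Prod>i\<in>A. q i) * (\<Prod>i\<in>insert a I - A. 1 - q i) * g A)"
    unfolding EBI_def Pow_insert using fin disj by (simp add: sum.union_disjoint)
  also have "(\<Sum>A\<in>insert a ` Pow I. (\<Prod>i\<in>A. q i) * (\<Prod>i\<in>insert a I - A. 1 - q i) * g A)
     = (\<Sum>A\<in>Pow I. (\<Prod>i\<in>insert a A. q i) * (\<Prod>i\<in>insert a I - insert a A. 1 - q i) * g (insert a A))"
    by (simp add: sum.reindex[OF inj])
  also have "\<dots> = (\<Sum>A\<in>Pow I. (\<Prod>i\<in>A. q i) * (\<Prod>i\<in>I - A. 1 - q i) * (q a * g (insert a A)))"
  proof (rule sum.cong[OF refl])
    fix A assume A: "A \<in> Pow I"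
    then have fA: "finite A" using fin finite_subset by auto
    have "a \<notin> A" using A a by auto
    moreover have "insert a I - insert a A = I - A" using a by auto
    ultimately show "(\<Prod>i\<in>insert a A. q i) * (\<Prod>i\<in>insert a I - insert a A. 1 - q i) * g (insert a A)
        = (\<Prod>i\<in>A. q i) * (\<Prod>i\<in>I - A. 1 - q i) * (q a * g (insert a A))"
      using fA by (simp add: prod.insert)
  qed
  also have "(\<Sum>A\<in>Pow I. (\<Prod>i\<in>A. q i) * (\<Prod>i\<in>insert a I - A. 1 - q i) * g A)
      = (\<Sum>A\<in>Pow I. (\<Prod>i\<in>A. q i) * (\<Prod>i\<in>I - A. 1 - q i) * ((1 - q a) * g A))"
  proof (rule sum.cong[OF refl])
    fix A assume A: "A \<in> Pow I"
    have "insert a I - A = insert a (I - A)" using A a by auto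
    moreover have "a \<notin> I - A" using a by auto
    ultimately show "(\<Prod>i\<in>A. q i) * (\<Prod>i\<in>insert a I - A. 1 - q i) * g A
        = (\<Prod>i\<in>A. q i) * (\<Prod>i\<in>I - A. 1 - q i) * ((1 - q a) * g A)"
      using fin by (simp add: prod.insert)
  qed
  finally show ?thesis unfolding EBI_def by (simp add: sum.distrib[symmetric] algebra_simps)
qed

lemma EBI_cong: "(\<And>A. A \<subseteq> I \<Longrightarrow> g A = h A) \<Longrightarrow> EBI I q g = EBI I q h"
  unfolding EBI_def by (intro sum.cong) auto

lemma EBI_lin: "EBI I q (\<lambda>A. a * g A + b * h A) = a * EBI I q g + b * EBI I q h"
  unfolding EBI_def by (simp add: sum.distrib sum_distrib_left algebra_simps)

lemma EBI_add: "EBI I q (\<lambda>A. g A + h A) = EBI I q g + EBI I q h"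
  unfolding EBI_def by (simp add: sum.distrib algebra_simps)

lemma EBI_const:
  assumes "finite I" shows "EBI I q (\<lambda>A. c) = c"
  using assms
proof (induction I rule: finite_induct)
  case (insert a I)
  then show ?case by (simp add: EBI_insert algebra_simps)
qed simp

lemma EBI_mono:
  assumes "finite I" "\<forall>i\<in>I. 0 \<le> q i \<and> q i \<le> 1" "\<And>A. A \<subseteq> I \<Longrightarrow> g A \<le> h A"
  shows "EBI I q g \<le> EBI I q h"
  unfolding EBI_def
proof (rule sum_mono)
  fix A assume A: "A \<in> Pow I"
  have "0 \<le> (\<Prod>i\<in>A. q i) * (\<Prod>i\<in>I - A. 1 - q i)"
    using assms(2) A by (intro mult_nonneg_nonneg prod_nonneg) auto
  then show "(\<Prod>i\<in>A. q i) * (\<Prod>i\<in>I - A. 1 - q i) * g A \<le> (\<Prod>i\<in>A. q i) * (\<Prod>i\<in>I - A. 1 - q i) * h A"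
    using assms(3) A by (intro mult_left_mono) auto
qed

lemma EBI_linear_sum:
  assumes "finite I"
  shows "EBI I q (\<lambda>A. \<Sum>i\<in>A. u i) = (\<Sum>i\<in>I. u i * q i)"
  using assms
proof (induction I arbitrary: u rule: finite_induct)
  case (insert a I)
  have "EBI (insert a I) q (\<lambda>A. \<Sum>i\<in>A. u i) = EBI I q (\<lambda>A. (\<Sum>i\<in>A. u i) + q a * u a)"
    unfolding EBI_insert[OF insert(1,2)]
  proof (rule EBI_cong)
    fix A assume "A \<subseteq> I"
    then have "a \<notin> A" "finite A" using insert(1,2) finite_subset by auto
    then show "(1 - q a) * (\<Sum>i\<in>A. u i) + q a * (\<Sum>i\<in>insert a A. u i) = (\<Sum>i\<in>A. u i) + q a * u a"
      by (simp add: algebra_simps)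
  qed
  also have "\<dots> = (\<Sum>i\<in>I. u i * q i) + q a * u a"
    using insert by (simp add: EBI_add EBI_const)
  finally show ?case using insert(1,2) by (simp add: algebra_simps)
qed simp

lemma EBI_nested:
  assumes "finite I"
  shows "EBI I y (\<lambda>S. EBI S p g) = EBI I (\<lambda>i. y i * p i) g"
  using assms
proof (induction I arbitrary: g rule: finite_induct)
  case (insert a I)
  have "EBI (insert a I) y (\<lambda>S. EBI S p g)
      = EBI I y (\<lambda>S. EBI S p (\<lambda>A. (1 - y a * p a) * g A + (y a * p a) * g (insert a A)))"
    unfolding EBI_insert[OF insert(1,2)]
  proof (rule EBI_cong)
    fix S assume S: "S \<subseteq> I"
    then have "a \<notin> S" "finite S" using insert(1,2) finite_subset by auto
    then have e1: "EBI (insert a S) p g = EBI S p (\<lambda>A. (1 - p a) * g A + p a * g (insert a A))"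
      by (simp add: EBI_insert)
    have e2: "EBI S p (\<lambda>A. (1 - p a) * g A + p a * g (insert a A))
        = (1 - p a) * EBI S p g + p a * EBI S p (\<lambda>A. g (insert a A))"
      by (rule EBI_lin)
    have e3: "EBI S p (\<lambda>A. (1 - y a * p a) * g A + (y a * p a) * g (insert a A))
        = (1 - y a * p a) * EBI S p g + (y a * p a) * EBI S p (\<lambda>A. g (insert a A))"
      by (rule EBI_lin)
    show "(1 - y a) * EBI S p g + y a * EBI (insert a S) p g
        = EBI S p (\<lambda>A. (1 - y a * p a) * g A + (y a * p a) * g (insert a A))"
      unfolding e1 e2 e3 by (simp add: algebra_simps)
  qed
  also have "\<dots> = EBI (insert a I) (\<lambda>i. y i * p i) g"
    using insert by (simp add: EBI_insert)
  finally show ?case .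
qed simp


definition PP :: "real \<Rightarrow> nat pmf" where
  "PP r = (if 0 < r then poisson_pmf r else return_pmf 0)"

lemma pmf_PP: "0 \<le> r \<Longrightarrow> pmf (PP r) j = r ^ j / fact j * exp (- r)"
  by (cases "r = 0"; cases j) (auto simp: PP_def pmf_return indicator_def)

lemma pois_conv:
  fixes a b :: real and m :: nat
  shows "(\<Sum>i\<le>m. b ^ (m - i) / fact (m - i) * exp (- b) * (a ^ i / fact i * exp (- a)))
       = (a + b) ^ m / fact m * exp (- (a + b))"
proof -
  have "(a + b) ^ m / fact m = (\<Sum>i\<le>m. of_nat (m choose i) * a ^ i * b ^ (m - i)) / fact m"
    by (simp add: binomial_ring)
  also have "\<dots> = (\<Sum>i\<le>m. a ^ i / fact i * (b ^ (m - i) / fact (m - i)))"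
    unfolding sum_divide_distrib
  proof (rule sum.cong[OF refl])
    fix i assume "i \<in> {..m}"
    then have "i \<le> m" by simp
    then show "of_nat (m choose i) * a ^ i * b ^ (m - i) / fact m = a ^ i / fact i * (b ^ (m - i) / fact (m - i))"
      by (simp add: binomial_fact field_simps)
  qed
  finally have "(a + b) ^ m / fact m * exp (- (a + b)) = (\<Sum>i\<le>m. a ^ i / fact i * (b ^ (m - i) / fact (m - i))) * (exp (-a) * exp (-b))"
    by (simp add: exp_add[symmetric])
  moreover have "(\<Sum>i\<le>m. b ^ (m - i) / fact (m - i) * exp (- b) * (a ^ i / fact i * exp (- a)))
     = (\<Sum>i\<le>m. a ^ i / fact i * (b ^ (m - i) / fact (m - i)) * (exp (-a) * exp (-b)))"
    by (rule sum.cong) (simp_all add: mult_ac)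
  ultimately show ?thesis by (simp add: sum_distrib_right)
qed

lemma PP_add:
  assumes a: "0 \<le> a" and b: "0 \<le> b"
  shows "bind_pmf (PP a) (\<lambda>i. map_pmf ((+) i) (PP b)) = PP (a + b)"
proof (rule pmf_eqI)
  fix m :: nat
  have pm: "pmf (map_pmf ((+) i) (PP b)) m = (if i \<le> m then pmf (PP b) (m - i) else 0)" for i
  proof -
    have "(+) i -` {m} = (if i \<le> m then {m - i} else {})" by auto
    then show ?thesis by (simp add: pmf_map measure_pmf_single)
  qed
  have "pmf (bind_pmf (PP a) (\<lambda>i. map_pmf ((+) i) (PP b))) m
      = (\<integral>i. (if i \<le> m then pmf (PP b) (m - i) else 0) \<partial>measure_pmf (PP a))"
    by (simp add: pmf_bind pm)
  also have "\<dots> = (\<Sum>i\<in>{..m}. (if i \<le> m then pmf (PP b) (m - i) else 0) * pmf (PP a) i)"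
    by (rule integral_measure_pmf_real) (auto split: if_splits)
  also have "\<dots> = (\<Sum>i\<le>m. b ^ (m - i) / fact (m - i) * exp (- b) * (a ^ i / fact i * exp (- a)))"
    using a b by (simp add: pmf_PP)
  also have "\<dots> = pmf (PP (a + b)) m"
    by (subst pois_conv) (simp add: pmf_PP a b)
  finally show "pmf (bind_pmf (PP a) (\<lambda>i. map_pmf ((+) i) (PP b))) m = pmf (PP (a + b)) m" .
qed

definition T :: "real \<Rightarrow> (nat \<Rightarrow> real) \<Rightarrow> nat \<Rightarrow> real" where
  "T r \<phi> y = measure_pmf.expectation (PP r) (\<lambda>j. \<phi> (y + j))"

lemma T_zero[simp]: "T 0 \<phi> y = \<phi> y"
  by (simp add: T_def PP_def)

lemma integrable_bounded_pmf:
  fixes f :: "'a \<Rightarrow> real"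
  assumes "\<And>x. \<bar>f x\<bar> \<le> B"
  shows "integrable (measure_pmf M) f"
  by (rule measure_pmf.integrable_const_bound[where B=B]) (use assms in auto)

lemma T_bounded:
  assumes "\<And>j. \<bar>\<phi> j\<bar> \<le> B"
  shows "\<bar>T r \<phi> y\<bar> \<le> B"
proof -
  have "\<bar>T r \<phi> y\<bar> \<le> measure_pmf.expectation (PP r) (\<lambda>j. \<bar>\<phi> (y + j)\<bar>)"
    unfolding T_def using integral_norm_bound[of "measure_pmf (PP r)" "\<lambda>j. \<phi> (y + j)"] by simp
  also have "\<dots> \<le> B"
    by (rule measure_pmf.integral_le_const) (auto intro!: integrable_bounded_pmf[where B=B] simp: assms)
  finally show ?thesis .
qed

lemma T_mono:
  assumes "\<And>j. \<bar>\<phi> j\<bar> \<le> B" "\<And>j. \<bar>\<psi> j\<bar> \<le> B" "\<And>j. \<phi> j \<le> \<psi> j"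
  shows "T r \<phi> y \<le> T r \<psi> y"
  unfolding T_def
  by (rule integral_mono) (auto intro!: integrable_bounded_pmf[where B=B] simp: assms)

lemma T_T:
  assumes B: "\<And>j. \<bar>\<phi> j\<bar> \<le> B" and a: "0 \<le> a" and b: "0 \<le> b"
  shows "T a (T b \<phi>) y = T (a + b) \<phi> y"
proof -
  have "T (a + b) \<phi> y = measure_pmf.expectation (bind_pmf (PP a) (\<lambda>i. map_pmf ((+) i) (PP b))) (\<lambda>j. \<phi> (y + j))"
    unfolding T_def PP_add[OF a b] ..
  also have "\<dots> = (\<integral>i. measure_pmf.expectation (map_pmf ((+) i) (PP b)) (\<lambda>j. \<phi> (y + j)) \<partial>measure_pmf (PP a))"
    unfolding measure_pmf_bind
    by (rule integral_bind[where K="count_space UNIV" and B=B and B'=1])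
       (auto simp: B measure_pmf.prob_space_axioms prob_space_imp_subprob_space measure_pmf_in_subprob_algebra prob_space.finite_measure[OF measure_pmf.prob_space_axioms])
  also have "\<dots> = T a (T b \<phi>) y"
    unfolding T_def by (simp add: add.assoc)
  finally show ?thesis ..
qed



lemma integrable_pmf_nat:
  fixes f :: "nat \<Rightarrow> real"
  assumes "summable (\<lambda>j. \<bar>pmf M j * f j\<bar>)"
  shows "integrable (measure_pmf M) f"
    "measure_pmf.expectation M f = (\<Sum>j. pmf M j * f j)"
proof -
  have as: "(\<lambda>j. pmf M j * f j) abs_summable_on UNIV"
    using assms by (simp add: abs_summable_on_nat_iff')
  then show "integrable (measure_pmf M) f"
    unfolding abs_summable_on_def measure_pmf_eq_density
    by (subst integrable_density) auto
  show "measure_pmf.expectation M f = (\<Sum>j. pmf M j * f j)"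
    using as by (simp add: pmf_expectation_eq_infsetsum infsetsum_nat')
qed

lemma sums_mean: "(\<lambda>j. real j * (q ^ j / fact j)) sums (q * exp q)"
proof -
  have "(\<lambda>m. q * (q ^ m / fact m)) sums (q * exp q)"
    using exp_converges[of q] by (intro sums_mult) (simp add: divide_inverse mult_ac)
  moreover have "(\<lambda>m. real (Suc m) * (q ^ Suc m / fact (Suc m))) = (\<lambda>m. q * (q ^ m / fact m))"
  proof (rule ext)
    fix m
    have "fact (Suc m) = (real (Suc m)) * (fact m :: real)" by (simp del: of_nat_Suc)
    moreover have "real (Suc m) > 0" by simp
    ultimately show "real (Suc m) * (q ^ Suc m / fact (Suc m)) = q * (q ^ m / fact m)"
      by (simp del: of_nat_Suc)
  qed
  ultimately have "(\<lambda>m. real (Suc m) * (q ^ Suc m / fact (Suc m))) sums (q * exp q)" by simp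
  then show ?thesis by (subst (asm) sums_Suc_iff) simp
qed

lemma poisson_mean:
  assumes q: "0 \<le> q"
  shows "integrable (measure_pmf (PP q)) real" "measure_pmf.expectation (PP q) real = q"
proof -
  have s: "(\<lambda>j. pmf (PP q) j * real j) sums (q * exp q * exp (-q))"
    using sums_mult2[OF sums_mean[of q], of "exp (-q)"] q by (simp add: pmf_PP mult_ac)
  then have "summable (\<lambda>j. \<bar>pmf (PP q) j * real j\<bar>)"
    by (simp add: sums_summable[OF s])
  note r = integrable_pmf_nat[OF this]
  show "integrable (measure_pmf (PP q)) real" by (rule r(1))
  show "measure_pmf.expectation (PP q) real = q"
    using r(2) s by (simp add: sums_iff exp_minus_inverse)
qed

lemma concave_bound:
  fixes \<phi> :: "nat \<Rightarrow> real"
  assumes cc: "\<And>j. \<phi> (j + 2) - \<phi> (j + 1) \<le> \<phi> (j + 1) - \<phi> j"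
  shows "\<phi> (y + j) \<le> \<phi> y + real j * (\<phi> (y + 1) - \<phi> y)"
proof -
  have d: "\<phi> (y + i + 1) - \<phi> (y + i) \<le> \<phi> (y + 1) - \<phi> y" for i
  proof (induction i)
    case (Suc i)
    have "\<phi> (y + i + 2) - \<phi> (y + i + 1) \<le> \<phi> (y + i + 1) - \<phi> (y + i)" using cc[of "y + i"] by simp
    then show ?case using Suc by simp
  qed simp
  show ?thesis
  proof (induction j)
    case (Suc j)
    then show ?case using d[of j] by (simp add: algebra_simps)
  qed simp
qed

lemma T_step:
  assumes cc: "\<And>j. \<phi> (j + 2) - \<phi> (j + 1) \<le> \<phi> (j + 1) - \<phi> j"
    and B: "\<And>j. \<bar>\<phi> j\<bar> \<le> B" and q: "0 \<le> q"
  shows "T q \<phi> y \<le> (1 - q) * \<phi> y + q * \<phi> (y + 1)"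
proof -
  note pm = poisson_mean[OF q]
  have cb: "\<And>j. \<phi> (y + j) \<le> \<phi> y + real j * (\<phi> (y + 1) - \<phi> y)"
    by (rule concave_bound[OF cc])
  have "T q \<phi> y \<le> measure_pmf.expectation (PP q) (\<lambda>j. \<phi> y + real j * (\<phi> (y + 1) - \<phi> y))"
    unfolding T_def
  proof (rule integral_mono)
    show "integrable (measure_pmf (PP q)) (\<lambda>j. \<phi> (y + j))"
      by (rule integrable_bounded_pmf[where B=B]) (simp add: B)
    show "integrable (measure_pmf (PP q)) (\<lambda>j. \<phi> y + real j * (\<phi> (y + 1) - \<phi> y))"
      using pm(1) by simp
  qed (rule cb)
  also have "\<dots> = \<phi> y + q * (\<phi> (y + 1) - \<phi> y)"
    using pm by (simp add: Bochner_Integration.integral_add integrable_bounded_pmf)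
  finally show ?thesis by (simp add: algebra_simps)
qed



lemma EBI_pois:
  assumes "finite I" "\<forall>i\<in>I. 0 \<le> q i \<and> q i \<le> 1"
  shows "\<And>\<phi> B. (\<And>j. \<bar>\<phi> j\<bar> \<le> B) \<Longrightarrow> (\<And>j. \<phi> (j + 2) - \<phi> (j + 1) \<le> \<phi> (j + 1) - \<phi> j)
     \<Longrightarrow> T (\<Sum>i\<in>I. q i) \<phi> 0 \<le> EBI I q (\<lambda>A. \<phi> (card A))"
  using assms
proof (induction I rule: finite_induct)
  case empty
  then show ?case by simp
next
  case (insert a I \<phi> B)
  have qa: "0 \<le> q a" "q a \<le> 1" using insert by auto
  define \<psi> where "\<psi> j = (1 - q a) * \<phi> j + q a * \<phi> (j + 1)" for j
  have eq: "EBI (insert a I) q (\<lambda>A. \<phi> (card A)) = EBI I q (\<lambda>A. \<psi> (card A))"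
    unfolding EBI_insert[OF insert(1,2)]
  proof (rule EBI_cong)
    fix A assume "A \<subseteq> I"
    then have "a \<notin> A" "finite A" using insert(1,2) finite_subset by auto
    then show "(1 - q a) * \<phi> (card A) + q a * \<phi> (card (insert a A)) = \<psi> (card A)"
      by (simp add: \<psi>_def)
  qed
  have \<psi>B: "\<bar>\<psi> j\<bar> \<le> B" for j
  proof -
    have "\<bar>\<psi> j\<bar> \<le> (1 - q a) * \<bar>\<phi> j\<bar> + q a * \<bar>\<phi> (j + 1)\<bar>"
      unfolding \<psi>_def using qa by (simp add: abs_mult order_trans[OF abs_triangle_ineq])
    also have "\<dots> \<le> (1 - q a) * B + q a * B"
      using qa insert(4) by (intro add_mono mult_left_mono) auto
    finally show ?thesis by (simp add: algebra_simps)
  qed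
  have \<psi>c: "\<psi> (j + 2) - \<psi> (j + 1) \<le> \<psi> (j + 1) - \<psi> j" for j
  proof -
    have "(1 - q a) * (\<phi> (j + 2) - \<phi> (j + 1)) \<le> (1 - q a) * (\<phi> (j + 1) - \<phi> j)"
      using qa insert(5)[of j] by (intro mult_left_mono) auto
    moreover have "q a * (\<phi> (j + 1 + 2) - \<phi> (j + 1 + 1)) \<le> q a * (\<phi> (j + 1 + 1) - \<phi> (j + 1))"
      using qa insert(5)[of "j + 1"] by (intro mult_left_mono) auto
    ultimately show ?thesis unfolding \<psi>_def by (simp add: algebra_simps numeral_2_eq_2)
  qed
  have IH: "T (\<Sum>i\<in>I. q i) \<psi> 0 \<le> EBI I q (\<lambda>A. \<psi> (card A))"
    using insert(3)[OF \<psi>B \<psi>c] insert(6) by simp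
  have lam: "0 \<le> (\<Sum>i\<in>I. q i)" using insert(6) by (intro sum_nonneg) auto
  have "T (\<Sum>i\<in>insert a I. q i) \<phi> 0 = T (\<Sum>i\<in>I. q i) (T (q a) \<phi>) 0"
    using insert(1,2) T_T[OF insert(4) lam qa(1)] by (simp add: add.commute)
  also have "\<dots> \<le> T (\<Sum>i\<in>I. q i) \<psi> 0"
  proof (rule T_mono[where B=B])
    show "\<bar>T (q a) \<phi> j\<bar> \<le> B" for j by (rule T_bounded) (rule insert(4))
    show "\<bar>\<psi> j\<bar> \<le> B" for j by (rule \<psi>B)
    show "T (q a) \<phi> j \<le> \<psi> j" for j
      unfolding \<psi>_def by (rule T_step[OF insert(5) insert(4) qa(1)])
  qed
  also note IH
  finally show ?case using eq by simp
qed

lemma pois_min_mean_T: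
  assumes r: "0 \<le> r"
  shows "T r (\<lambda>j. real (min j k)) 0 = pois_min_mean r k"
proof -
  have s1: "summable (\<lambda>j. r ^ j / fact j * exp (- r))"
    using exp_converges[of r] by (intro summable_mult2) (simp add: sums_summable divide_inverse mult_ac)
  have "summable (\<lambda>j. \<bar>pmf (PP r) j * real (min j k)\<bar>)"
  proof (rule summable_comparison_test'[where g="\<lambda>j. real k * (r ^ j / fact j * exp (- r))"])
    show "summable (\<lambda>j. real k * (r ^ j / fact j * exp (- r)))" by (intro summable_mult s1)
    fix j
    show "norm \<bar>pmf (PP r) j * real (min j k)\<bar> \<le> real k * (r ^ j / fact j * exp (- r))"
    proof -
      have "norm \<bar>pmf (PP r) j * real (min j k)\<bar> = pmf (PP r) j * real (min j k)" by simp
      also have "\<dots> \<le> pmf (PP r) j * real k" by (intro mult_left_mono) auto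
      finally show ?thesis using r by (simp add: pmf_PP mult.commute)
    qed
  qed
  note ip = integrable_pmf_nat[OF this]
  show ?thesis
    unfolding T_def pois_min_mean_def using ip(2) r by (simp add: pmf_PP mult.commute)
qed

lemma min_concave: "real (min (j + 2) k) - real (min (j + 1) k) \<le> real (min (j + 1) k) - real (min j k)"
  by (simp add: min_def)

lemma min_bounded: "\<bar>real (min j k)\<bar> \<le> real k"
  by simp

lemma EBI_min_ge:
  assumes "finite I" "\<forall>i\<in>I. 0 \<le> q i \<and> q i \<le> 1"
  shows "pois_min_mean (\<Sum>i\<in>I. q i) k \<le> EBI I q (\<lambda>A. real (min (card A) k))"
proof -
  have "0 \<le> (\<Sum>i\<in>I. q i)" using assms(2) by (intro sum_nonneg) auto
  then show ?thesis
    using EBI_pois[OF assms, of "\<lambda>j. real (min j k)" "real k"] min_concave min_bounded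
    by (simp add: pois_min_mean_T)
qed


definition Sx :: "nat \<Rightarrow> real \<Rightarrow> real" where "Sx m x = (\<Sum>j\<le>m. x ^ j / fact j)"
definition Gc :: "nat \<Rightarrow> real \<Rightarrow> real" where "Gc k x = (\<Sum>m<k. (1 - exp (- x) * Sx m x))"
definition gd :: "nat \<Rightarrow> real \<Rightarrow> real" where "gd k x = exp (- x) * (\<Sum>m<k. x ^ m / fact m)"

lemma zero_pow_sum: "(\<Sum>j\<le>m. (0::real) ^ j / fact j) = 1"
  by (induction m) auto

lemma zero_pow_sum': "(\<Sum>j<Suc m. (0::real) ^ j / fact j) = 1"
  using zero_pow_sum[of m] by (simp add: lessThan_Suc_atMost)

lemma DERIV_Sx: "DERIV (Sx m) x :> (Sx m x - x ^ m / fact m)"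
proof (induction m)
  case 0
  have "Sx 0 = (\<lambda>x. 1)" by (rule ext) (simp add: Sx_def)
  then show ?case by (simp add: Sx_def)
next
  case (Suc m)
  have e: "Sx (Suc m) = (\<lambda>x. Sx m x + x ^ Suc m / fact (Suc m))" by (rule ext) (simp add: Sx_def)
  have d: "DERIV (\<lambda>x. x ^ Suc m / fact (Suc m)) x :> x ^ m / fact m"
  proof -
    have "DERIV (\<lambda>x. x ^ Suc m / fact (Suc m)) x :> real (Suc m) * x ^ m / fact (Suc m)"
      using DERIV_cdivide[OF DERIV_pow[of "Suc m" x], of "fact (Suc m)"] by simp
    moreover have "real (Suc m) * x ^ m / fact (Suc m) = x ^ m / fact m"
    proof -
      have "fact (Suc m) = (real (Suc m)) * (fact m :: real)" by (simp del: of_nat_Suc)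
      moreover have "real (Suc m) > 0" by simp
      ultimately show ?thesis by (simp del: of_nat_Suc)
    qed
    ultimately show ?thesis by simp
  qed
  have "DERIV (Sx (Suc m)) x :> (Sx m x - x ^ m / fact m) + x ^ m / fact m"
    unfolding e by (rule DERIV_add[OF Suc d])
  then show ?case by (simp add: e)
qed

lemma DERIV_Q: "DERIV (\<lambda>x. exp (- x) * Sx m x) x :> - exp (- x) * x ^ m / fact m"
proof -
  have e: "DERIV (\<lambda>x. exp (- x)) x :> - exp (- x)" by (auto intro!: derivative_eq_intros)
  have "DERIV (\<lambda>x. exp (- x) * Sx m x) x :> (- exp (- x)) * Sx m x + (Sx m x - x ^ m / fact m) * exp (- x)"
    by (rule DERIV_mult[OF e DERIV_Sx])
  then show ?thesis by (simp add: algebra_simps)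
qed

lemma DERIV_Gc: "DERIV (Gc k) x :> gd k x"
proof -
  have "DERIV (\<lambda>x. \<Sum>m<k. (1 - exp (- x) * Sx m x)) x :> (\<Sum>m<k. 0 - (- exp (- x) * x ^ m / fact m))"
    by (intro DERIV_sum DERIV_diff DERIV_const DERIV_Q)
  moreover have "(\<Sum>m<k. 0 - (- exp (- x) * x ^ m / fact m)) = gd k x"
    by (simp add: gd_def sum_distrib_left)
  ultimately show ?thesis unfolding Gc_def[abs_def] by simp
qed

lemma gd_Sx: "gd (Suc K) x = exp (- x) * Sx K x"
  by (simp add: gd_def Sx_def lessThan_Suc_atMost)

lemma DERIV_gd: "DERIV (gd (Suc K)) x :> - exp (- x) * x ^ K / fact K"
proof -
  have "gd (Suc K) = (\<lambda>x. exp (- x) * Sx K x)" by (rule ext) (simp add: gd_Sx)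
  then show ?thesis using DERIV_Q by simp
qed

lemma Gc_0[simp]: "Gc k 0 = 0"
  by (simp add: Gc_def Sx_def zero_pow_sum)

lemma gd_nonneg: "0 \<le> x \<Longrightarrow> 0 \<le> gd k x"
  unfolding gd_def by (intro mult_nonneg_nonneg sum_nonneg) auto

lemma gd_antimono:
  assumes "0 \<le> a" "a \<le> b" shows "gd (Suc K) b \<le> gd (Suc K) a"
proof (rule deriv_nonpos_imp_antimono[where g="gd (Suc K)" and g' = "\<lambda>x. - exp (- x) * x ^ K / fact K"])
  fix t assume "t \<in> {a..b}"
  show "(gd (Suc K) has_real_derivative - exp (- t) * t ^ K / fact K) (at t)" by (rule DERIV_gd)
next
  fix t assume "t \<in> {a..b}"
  then have "0 \<le> t" using assms by auto
  then have "0 \<le> exp (- t) * t ^ K / fact K" by simp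
  then show "- exp (- t) * t ^ K / fact K \<le> 0" by simp
qed (rule assms(2))

lemma gd_le1:
  assumes "0 \<le> x" shows "gd (Suc K) x \<le> 1"
proof -
  have "gd (Suc K) x \<le> gd (Suc K) 0" by (rule gd_antimono) (use assms in auto)
  also have "gd (Suc K) 0 = 1" using zero_pow_sum'[of K] by (simp add: gd_def)
  finally show ?thesis .
qed

lemma Gc_mono:
  assumes "0 \<le> a" "a \<le> b" shows "Gc k a \<le> Gc k b"
proof (rule deriv_nonneg_imp_mono[where g="Gc k" and g'="gd k"])
  fix t assume "t \<in> {a..b}"
  show "(Gc k has_real_derivative gd k t) (at t)" by (rule DERIV_Gc)
next
  fix t assume "t \<in> {a..b}"
  then show "0 \<le> gd k t" using assms by (intro gd_nonneg) auto
qed (rule assms(2))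

lemma Gc_nonneg: "0 \<le> x \<Longrightarrow> 0 \<le> Gc k x"
  using Gc_mono[of 0 x k] by simp

lemma Gc_le:
  assumes "0 \<le> x" shows "Gc (Suc K) x \<le> x"
proof -
  have "(\<lambda>x. x - Gc (Suc K) x) 0 \<le> (\<lambda>x. x - Gc (Suc K) x) x"
  proof (rule deriv_nonneg_imp_mono[where g="\<lambda>x. x - Gc (Suc K) x" and g'="\<lambda>x. 1 - gd (Suc K) x"])
    show "t \<in> {0..x} \<Longrightarrow> ((\<lambda>x. x - Gc (Suc K) x) has_real_derivative 1 - gd (Suc K) t) (at t)" for t
      using DERIV_diff[OF DERIV_ident DERIV_Gc[of "Suc K" t]] by simp
    show "t \<in> {0..x} \<Longrightarrow> 0 \<le> 1 - gd (Suc K) t" for t using gd_le1[of t K] by auto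
  qed (use assms in auto)
  then show ?thesis by simp
qed

lemma Gc_scale:
  assumes x: "0 \<le> x" and t: "0 \<le> t" "t \<le> 1"
  shows "t * Gc (Suc K) x \<le> Gc (Suc K) (t * x)"
proof (cases "x = 0 \<or> t = 0 \<or> t = 1")
  case True
  then show ?thesis by auto
next
  case False
  then have x0: "0 < x" and t0: "0 < t" "t < 1" using x t by auto
  define G where "G = Gc (Suc K)"
  define g where "g = gd (Suc K)"
  have dG: "\<And>z. DERIV G z :> g z" unfolding G_def g_def by (rule DERIV_Gc)
  have tx: "0 < t * x" "t * x < x" using x0 t0 by auto
  obtain z1 where z1: "0 < z1" "z1 < t * x" "G (t * x) - G 0 = (t * x - 0) * g z1"
    using MVT2[OF tx(1) dG] by blast
  obtain z2 where z2: "t * x < z2" "z2 < x" "G x - G (t * x) = (x - t * x) * g z2"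
    using MVT2[OF tx(2) dG] by blast
  have gz: "g z2 \<le> g z1" unfolding g_def by (rule gd_antimono) (use z1 z2 in auto)
  have G0: "G 0 = 0" unfolding G_def by simp
  have Gt: "G (t * x) = t * x * g z1" using z1(3) G0 by simp
  have Gx: "G x = G (t * x) + (x - t * x) * g z2" using z2(3) by linarith
  have "t * G x = t * (t * x * g z1 + (x - t * x) * g z2)" unfolding Gx Gt ..
  also have "\<dots> \<le> t * (t * x * g z1 + (x - t * x) * g z1)"
  proof -
    have "(x - t * x) * g z2 \<le> (x - t * x) * g z1"
      using gz tx t0 by (intro mult_left_mono) auto
    then show ?thesis using t0 by (intro mult_left_mono) auto
  qed
  also have "\<dots> = t * x * g z1" by (simp add: algebra_simps)
  also have "\<dots> = G (t * x)" using Gt by simp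
  finally show ?thesis unfolding G_def .
qed

lemma Gc_cont: "continuous_on A (Gc k)"
  by (intro continuous_at_imp_continuous_on ballI DERIV_isCont[OF DERIV_Gc])


lemma sum_if_less: "(\<Sum>m<k. if m < j then c else 0) = real (min j k) * (c::real)"
proof (induction k)
  case (Suc k)
  show ?case
  proof (cases "k < j")
    case True
    then have "min j (Suc k) = Suc (min j k)" by auto
    then show ?thesis using Suc True by (simp add: algebra_simps)
  next
    case False
    then show ?thesis using Suc by (simp add: min_def)
  qed
qed simp

lemma pois_min_mean_Gc: "pois_min_mean x k = Gc k x"
proof -
  define w where "w j = x ^ j / fact j * exp (- x)" for j
  have ws: "w sums 1"
  proof -
    have "(\<lambda>j. x ^ j / fact j * exp (- x)) sums (exp x * exp (- x))"
      using exp_converges[of x] by (intro sums_mult2) (simp add: divide_inverse mult_ac)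
    moreover have "w = (\<lambda>j. x ^ j / fact j * exp (- x))" by (rule ext) (simp add: w_def)
    ultimately show ?thesis by (simp add: exp_minus_inverse)
  qed
  have wm: "(\<lambda>j. if j \<le> m then w j else 0) sums (exp (- x) * Sx m x)" for m
  proof -
    have "(\<lambda>j. if j \<le> m then w j else 0) sums (\<Sum>j\<in>{..m}. if j \<le> m then w j else 0)"
      by (rule sums_finite) auto
    moreover have "(\<Sum>j\<in>{..m}. if j \<le> m then w j else 0) = exp (- x) * Sx m x"
      by (simp add: Sx_def w_def sum_distrib_left mult_ac)
    ultimately show ?thesis by simp
  qed
  have wg: "(\<lambda>j. if m < j then w j else 0) sums (1 - exp (- x) * Sx m x)" for m
  proof -
    have "(\<lambda>j. w j - (if j \<le> m then w j else 0)) sums (1 - exp (- x) * Sx m x)"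
      by (rule sums_diff[OF ws wm])
    moreover have "(\<lambda>j. w j - (if j \<le> m then w j else 0)) = (\<lambda>j. if m < j then w j else 0)"
      by (rule ext) auto
    ultimately show ?thesis by simp
  qed
  have "(\<lambda>j. \<Sum>m<k. if m < j then w j else 0) sums (\<Sum>m<k. 1 - exp (- x) * Sx m x)"
    by (rule sums_sum) (rule wg)
  moreover have "(\<lambda>j. \<Sum>m<k. if m < j then w j else 0) = (\<lambda>j. real (min j k) * w j)"
    by (rule ext) (rule sum_if_less)
  ultimately have "(\<lambda>j. real (min j k) * w j) sums Gc k x" by (simp add: Gc_def)
  then show ?thesis unfolding pois_min_mean_def w_def by (simp add: sums_iff)
qed


lemma indep_offer_expect:
  assumes y: "\<forall>i<n. 0 \<le> y i \<and> y i \<le> 1"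
  shows "measure_pmf.expectation (indep_offer n y) F = EBI {0..<n} y F"
proof -
  define I where "I = {0..<n::nat}"
  define M where "M = Pi_pmf I False (\<lambda>i. bernoulli_pmf (y i))"
  define g where "g f = {i\<in>I. f i}" for f :: "nat \<Rightarrow> bool"
  define h where "h S = (\<lambda>i. i \<in> S)" for S :: "nat set"
  have fin: "finite I" by (simp add: I_def)
  have "measure_pmf.expectation (indep_offer n y) F = measure_pmf.expectation M (\<lambda>f. F (g f))"
    by (simp add: indep_offer_def M_def g_def I_def)
  also have "\<dots> = (\<Sum>f\<in>h ` Pow I. F (g f) * pmf M f)"
  proof (rule integral_measure_pmf_real)
    show "finite (h ` Pow I)" using fin by simp
    fix f assume "f \<in> set_pmf M"
    then have "\<forall>x. x \<notin> I \<longrightarrow> f x = False"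
      using set_Pi_pmf_subset[OF fin, of False "\<lambda>i. bernoulli_pmf (y i)"] unfolding M_def by auto
    then have "f = h (g f)" unfolding h_def g_def by (intro ext) auto
    moreover have "g f \<in> Pow I" by (auto simp: g_def)
    ultimately show "f \<in> h ` Pow I" by blast
  qed
  also have "\<dots> = (\<Sum>S\<in>Pow I. F (g (h S)) * pmf M (h S))"
  proof (rule sum.reindex_cong[where l=h])
    show "inj_on h (Pow I)" unfolding h_def inj_on_def by (metis Collect_mem_eq)
  qed auto
  also have "\<dots> = (\<Sum>S\<in>Pow I. (\<Prod>i\<in>S. y i) * (\<Prod>i\<in>I - S. 1 - y i) * F S)"
  proof (rule sum.cong[OF refl])
    fix S assume S: "S \<in> Pow I"
    have gh: "g (h S) = S" using S by (auto simp: g_def h_def)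
    have "pmf M (h S) = (\<Prod>x\<in>I. pmf (bernoulli_pmf (y x)) (x \<in> S))"
      unfolding M_def using S fin by (subst pmf_Pi) (auto simp: h_def)
    also have "\<dots> = (\<Prod>x\<in>I. if x \<in> S then y x else 1 - y x)"
      using y by (intro prod.cong refl) (auto simp: I_def)
    also have "\<dots> = (\<Prod>i\<in>S. y i) * (\<Prod>i\<in>I - S. 1 - y i)"
      using fin S by (subst prod.If_cases) (auto intro!: arg_cong2[where f="(*)"] prod.cong)
    finally show "F (g (h S)) * pmf M (h S) = (\<Prod>i\<in>S. y i) * (\<Prod>i\<in>I - S. 1 - y i) * F S"
      by (simp add: gh)
  qed
  finally show ?thesis by (simp add: EBI_def I_def)
qed

lemma det_reward_EBI: "det_reward k p v S = EBI S p (reward k v)"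
  by (simp add: det_reward_def EBI_def)

lemma policy_reward_indep:
  assumes "\<forall>i<n. 0 \<le> y i \<and> y i \<le> 1"
  shows "policy_reward k p v (indep_offer n y) = EBI {0..<n} y (det_reward k p v)"
  unfolding policy_reward_def by (rule indep_offer_expect[OF assms])

lemma EBI_reward:
  assumes "finite I"
  shows "EBI I q (reward k v) = (\<Sum>i\<in>I. (v i - 1) * q i) + EBI I q (\<lambda>A. real (min (card A) k))"
proof -
  have "EBI I q (reward k v) = EBI I q (\<lambda>A. (\<Sum>i\<in>A. v i - 1) + real (min (card A) k))"
  proof (rule EBI_cong)
    fix A assume "A \<subseteq> I"
    then have "finite A" using assms finite_subset by auto
    then show "reward k v A = (\<Sum>i\<in>A. v i - 1) + real (min (card A) k)"
      by (simp add: reward_def sum_subtractf max_def min_def)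
  qed
  also have "\<dots> = (\<Sum>i\<in>I. (v i - 1) * q i) + EBI I q (\<lambda>A. real (min (card A) k))"
    by (simp add: EBI_add EBI_linear_sum[OF assms])
  finally show ?thesis .
qed

lemma EBI_min_le:
  assumes "finite I" "\<forall>i\<in>I. 0 \<le> q i \<and> q i \<le> 1"
  shows "EBI I q (\<lambda>A. real (min (card A) k)) \<le> (\<Sum>i\<in>I. q i)"
    "EBI I q (\<lambda>A. real (min (card A) k)) \<le> real k"
proof -
  have "EBI I q (\<lambda>A. real (min (card A) k)) \<le> EBI I q (\<lambda>A. \<Sum>i\<in>A. 1)"
    by (rule EBI_mono[OF assms]) auto
  also have "\<dots> = (\<Sum>i\<in>I. q i)" using EBI_linear_sum[OF assms(1), of q "\<lambda>i. 1"] by simp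
  finally show "EBI I q (\<lambda>A. real (min (card A) k)) \<le> (\<Sum>i\<in>I. q i)" .
  have "EBI I q (\<lambda>A. real (min (card A) k)) \<le> EBI I q (\<lambda>A. real k)"
    by (rule EBI_mono[OF assms]) auto
  also have "\<dots> = real k" by (rule EBI_const[OF assms(1)])
  finally show "EBI I q (\<lambda>A. real (min (card A) k)) \<le> real k" .
qed


definition feas :: "nat \<Rightarrow> nat \<Rightarrow> (nat \<Rightarrow> real) \<Rightarrow> (nat \<Rightarrow> real) \<Rightarrow> real \<Rightarrow> bool" where
  "feas n k p y z \<longleftrightarrow> (\<forall>i<n. 0 \<le> y i \<and> y i \<le> 1) \<and> z \<le> real k - (\<Sum>i<n. p i * y i) \<and> z \<le> 0"

lemma LP_set_eq: "{(\<Sum>i<n. v i * p i * y i) + z | y z.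
       (\<forall>i<n. 0 \<le> y i \<and> y i \<le> 1) \<and> z \<le> real k - (\<Sum>i<n. p i * y i) \<and> z \<le> 0}
   = {(\<Sum>i<n. v i * p i * y i) + z | y z. feas n k p y z}"
  by (simp add: feas_def)

lemma LP_bdd:
  assumes p: "\<forall>i<n. 0 \<le> p i"
  shows "bdd_above {(\<Sum>i<n. v i * p i * y i) + z | y z. feas n k p y z}"
proof (rule bdd_aboveI[where M="\<Sum>i<n. \<bar>v i\<bar> * p i"])
  fix x assume "x \<in> {(\<Sum>i<n. v i * p i * y i) + z | y z. feas n k p y z}"
  then obtain y z where x: "x = (\<Sum>i<n. v i * p i * y i) + z" and f: "feas n k p y z" by auto
  have "(\<Sum>i<n. v i * p i * y i) \<le> (\<Sum>i<n. \<bar>v i\<bar> * p i)"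
  proof (rule sum_mono)
    fix i assume "i \<in> {..<n}"
    then have "0 \<le> p i" "0 \<le> y i" "y i \<le> 1" using p f by (auto simp: feas_def)
    then have "v i * p i * y i \<le> \<bar>v i\<bar> * p i * y i" by (intro mult_right_mono) auto
    also have "\<dots> \<le> \<bar>v i\<bar> * p i * 1" using \<open>0 \<le> p i\<close> \<open>y i \<le> 1\<close> by (intro mult_left_mono) auto
    finally show "v i * p i * y i \<le> \<bar>v i\<bar> * p i" by simp
  qed
  then show "x \<le> (\<Sum>i<n. \<bar>v i\<bar> * p i)" using x f by (simp add: feas_def)
qed

lemma LP_ge:
  assumes p: "\<forall>i<n. 0 \<le> p i" and f: "feas n k p y z"
  shows "(\<Sum>i<n. v i * p i * y i) + z \<le> LP_sim n k p v"
  unfolding LP_sim_def LP_set_eq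
  by (rule cSup_upper[OF _ LP_bdd[OF p]]) (use f in auto)

lemma LP_le:
  assumes "\<And>y z. feas n k p y z \<Longrightarrow> (\<Sum>i<n. v i * p i * y i) + z \<le> L"
  shows "LP_sim n k p v \<le> L"
  unfolding LP_sim_def LP_set_eq
proof (rule cSup_least)
  have "feas n k p (\<lambda>_. 0) 0" by (simp add: feas_def)
  then show "{(\<Sum>i<n. v i * p i * y i) + z | y z. feas n k p y z} \<noteq> {}" by blast
qed (use assms in auto)

lemma dual_bound:
  assumes f: "feas n k p y z" and p: "\<forall>i<n. 0 \<le> p i" and b: "0 \<le> \<beta>" "\<beta> \<le> 1"
  shows "(\<Sum>i<n. v i * p i * y i) + z \<le> \<beta> * real k + (\<Sum>i<n. p i * max (v i - \<beta>) 0)"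
proof -
  have z1: "z \<le> real k - (\<Sum>i<n. p i * y i)" and z2: "z \<le> 0" using f by (auto simp: feas_def)
  have "z = \<beta> * z + (1 - \<beta>) * z" by (simp add: algebra_simps)
  also have "\<dots> \<le> \<beta> * (real k - (\<Sum>i<n. p i * y i)) + (1 - \<beta>) * 0"
    using b z1 z2 by (intro add_mono mult_left_mono mult_left_mono_neg) auto
  finally have "(\<Sum>i<n. v i * p i * y i) + z \<le> \<beta> * real k + (\<Sum>i<n. p i * y i * (v i - \<beta>))"
    by (simp add: algebra_simps sum_distrib_left sum_subtractf)
  also have "(\<Sum>i<n. p i * y i * (v i - \<beta>)) \<le> (\<Sum>i<n. p i * max (v i - \<beta>) 0)"
  proof (rule sum_mono)
    fix i assume "i \<in> {..<n}"
    then have h: "0 \<le> p i" "0 \<le> y i" "y i \<le> 1" using p f by (auto simp: feas_def)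
    have "p i * y i * (v i - \<beta>) \<le> p i * y i * max (v i - \<beta>) 0"
      using h by (intro mult_left_mono) auto
    also have "\<dots> \<le> p i * 1 * max (v i - \<beta>) 0"
      using h by (intro mult_right_mono mult_left_mono) auto
    finally show "p i * y i * (v i - \<beta>) \<le> p i * max (v i - \<beta>) 0" by simp
  qed
  finally show ?thesis by simp
qed

lemma det_le_LP:
  assumes S: "S \<subseteq> {0..<n}" and p: "\<forall>i<n. 0 \<le> p i \<and> p i \<le> 1"
  shows "det_reward k p v S \<le> LP_sim n k p v"
proof -
  have fS: "finite S" using S finite_subset by auto
  have pS: "\<forall>i\<in>S. 0 \<le> p i \<and> p i \<le> 1" using S p by auto
  define y where "y i = (if i \<in> S then 1 else 0::real)" for i
  define z where "z = min 0 (real k - (\<Sum>i\<in>S. p i))"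
  have sy: "(\<Sum>i<n. p i * y i) = (\<Sum>i\<in>S. p i)"
  proof -
    have "(\<Sum>i<n. p i * y i) = (\<Sum>i\<in>{..<n} \<inter> S. p i)"
      by (simp add: y_def sum.If_cases[symmetric] if_distrib cong: if_cong) (simp add: sum.inter_restrict)
    also have "{..<n} \<inter> S = S" using S by auto
    finally show ?thesis .
  qed
  have svy: "(\<Sum>i<n. v i * p i * y i) = (\<Sum>i\<in>S. v i * p i)"
  proof -
    have "(\<Sum>i<n. v i * p i * y i) = (\<Sum>i\<in>{..<n} \<inter> S. v i * p i)"
      by (simp add: y_def sum.inter_restrict if_distrib cong: if_cong)
    also have "{..<n} \<inter> S = S" using S by auto
    finally show ?thesis .
  qed
  have f: "feas n k p y z" unfolding feas_def using sy by (auto simp: y_def z_def)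
  have "det_reward k p v S = (\<Sum>i\<in>S. (v i - 1) * p i) + EBI S p (\<lambda>A. real (min (card A) k))"
    by (simp add: det_reward_EBI EBI_reward[OF fS])
  also have "\<dots> \<le> (\<Sum>i\<in>S. (v i - 1) * p i) + min (\<Sum>i\<in>S. p i) (real k)"
    using EBI_min_le[OF fS pS, of k] by auto
  also have "\<dots> = (\<Sum>i<n. v i * p i * y i) + z"
    unfolding svy z_def by (simp add: sum_subtractf algebra_simps min_def)
  also have "\<dots> \<le> LP_sim n k p v" by (rule LP_ge[OF _ f]) (use p in auto)
  finally show ?thesis .
qed

lemma OPT_le_LP:
  assumes p: "\<forall>i<n. 0 \<le> p i \<and> p i \<le> 1"
  shows "OPT_sim n k p v \<le> LP_sim n k p v"
  unfolding OPT_sim_def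
proof (rule cSUP_least)
  have "valid_policy n (return_pmf {})" by (simp add: valid_policy_def)
  then show "{\<pi>. valid_policy n \<pi>} \<noteq> {}" by blast
next
  fix \<pi> assume "\<pi> \<in> {\<pi>. valid_policy n \<pi>}"
  then have sub: "set_pmf \<pi> \<subseteq> Pow {0..<n}" by (auto simp: valid_policy_def)
  then have fin: "finite (set_pmf \<pi>)" by (rule finite_subset) auto
  show "policy_reward k p v \<pi> \<le> LP_sim n k p v"
    unfolding policy_reward_def
  proof (rule measure_pmf.integral_le_const)
    show "integrable (measure_pmf \<pi>) (det_reward k p v)" by (rule integrable_measure_pmf_finite[OF fin])
    show "AE S in measure_pmf \<pi>. det_reward k p v S \<le> LP_sim n k p v"
      using sub by (auto simp: AE_measure_pmf_iff intro!: det_le_LP p)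
  qed
qed


definition pf :: "nat \<Rightarrow> real \<Rightarrow> nat \<Rightarrow> real" where
  "pf j \<theta> i = (if i < j then 1 else if i = j then \<theta> else 0)"

lemma prefix_bounds:
  assumes "prefix_form n y" shows "\<forall>i<n. 0 \<le> y i \<and> y i \<le> 1"
  using assms unfolding prefix_form_def by fastforce

lemma prefix_exists_aux:
  assumes p: "\<forall>i<n. 0 \<le> p i" and m: "0 \<le> m" "m \<le> (\<Sum>i<n. p i)"
  shows "\<exists>j \<theta>. 0 \<le> \<theta> \<and> \<theta> \<le> 1 \<and> (j < n \<or> (j = n \<and> \<theta> = 0)) \<and> (\<Sum>i<n. pf j \<theta> i * p i) = m"
  using p m
proof (induction n arbitrary: m)
  case 0
  then show ?case by (intro exI[of _ 0] exI[of _ 0]) auto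
next
  case (Suc n)
  show ?case
  proof (cases "m \<le> (\<Sum>i<n. p i)")
    case True
    then obtain j \<theta> where j: "0 \<le> \<theta>" "\<theta> \<le> 1" "j < n \<or> (j = n \<and> \<theta> = 0)" "(\<Sum>i<n. pf j \<theta> i * p i) = m"
      using Suc.IH[of m] Suc.prems by auto
    have "pf j \<theta> n = 0" using j(3) by (auto simp: pf_def)
    then show ?thesis using j by (intro exI[of _ j] exI[of _ \<theta>]) auto
  next
    case False
    define S where "S = (\<Sum>i<n. p i)"
    have pn: "0 < p n" using False Suc.prems by (simp add: S_def)
    define \<theta> where "\<theta> = (m - S) / p n"
    have th: "0 \<le> \<theta>" "\<theta> \<le> 1" using False Suc.prems pn by (auto simp: \<theta>_def S_def field_simps)
    have "(\<Sum>i<Suc n. pf n \<theta> i * p i) = (\<Sum>i<n. p i) + \<theta> * p n"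
      by (simp add: pf_def)
    also have "\<dots> = m" using pn by (simp add: \<theta>_def S_def)
    finally show ?thesis using th by (intro exI[of _ n] exI[of _ \<theta>]) auto
  qed
qed

lemma prefix_exists:
  assumes p: "\<forall>i<n. 0 \<le> p i" and m: "0 \<le> m" "m \<le> (\<Sum>i<n. p i)"
  shows "\<exists>y. prefix_form n y \<and> (\<Sum>i<n. y i * p i) = m"
proof -
  obtain j \<theta> where j: "0 \<le> \<theta>" "\<theta> \<le> 1" "(\<Sum>i<n. pf j \<theta> i * p i) = m"
    using prefix_exists_aux[OF assms] by blast
  have "prefix_form n (pf j \<theta>)" unfolding prefix_form_def pf_def using j by blast
  then show ?thesis using j by blast
qed

lemma prefix_concave:
  assumes n: "0 < n" and pre: "prefix_form n y'" and y: "\<forall>i<n. 0 \<le> y i \<and> y i \<le> 1"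
    and p: "\<forall>i<n. 0 \<le> p i" and u: "\<forall>i j. i \<le> j \<and> j < n \<longrightarrow> u j \<le> u i"
    and s: "0 \<le> s" "s \<le> 1" and mass: "(\<Sum>i<n. y' i * p i) = s * (\<Sum>i<n. y i * p i)"
  shows "s * (\<Sum>i<n. u i * (y i * p i)) \<le> (\<Sum>i<n. u i * (y' i * p i))"
proof -
  obtain j \<theta> where th: "0 \<le> \<theta>" "\<theta> \<le> 1" and y': "\<forall>i<n. y' i = (if i < j then 1 else if i = j then \<theta> else 0)"
    using pre unfolding prefix_form_def by blast
  define r where "r = min j (n - 1)"
  have rn: "r < n" using n by (simp add: r_def)
  define d where "d i = y' i * p i - s * (y i * p i)" for i
  have sd: "(\<Sum>i<n. d i) = 0" using mass by (simp add: d_def sum_subtractf sum_distrib_left)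
  have "(\<Sum>i<n. u i * (y' i * p i)) - s * (\<Sum>i<n. u i * (y i * p i)) = (\<Sum>i<n. u i * d i)"
    by (simp add: d_def sum_subtractf sum_distrib_left algebra_simps)
  also have "\<dots> = (\<Sum>i<n. (u i - u r) * d i) + u r * (\<Sum>i<n. d i)"
    by (simp add: sum_distrib_left sum_subtractf algebra_simps sum.distrib)
  also have "\<dots> = (\<Sum>i<n. (u i - u r) * d i)" using sd by simp
  also have "\<dots> \<ge> 0"
  proof (rule sum_nonneg)
    fix i assume i: "i \<in> {..<n}"
    then have hi: "0 \<le> p i" "0 \<le> y i" "y i \<le> 1" using p y by auto
    consider "i < r" | "i = r" | "r < i" by linarith
    then show "0 \<le> (u i - u r) * d i"
    proof cases
      case 1
      then have "i < j" by (simp add: r_def)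
      then have "y' i = 1" using y' i by auto
      then have "d i = p i * (1 - s * y i)" by (simp add: d_def algebra_simps)
      moreover have "s * y i \<le> 1" using hi s by (simp add: mult_le_one)
      ultimately have "0 \<le> d i" using hi by simp
      moreover have "u r \<le> u i" using u 1 rn by auto
      ultimately show ?thesis by simp
    next
      case 2 then show ?thesis by simp
    next
      case 3
      then have "r = j" using i by (auto simp: r_def)
      then have "y' i = 0" using y' i 3 by auto
      then have "d i = - (s * (y i * p i))" by (simp add: d_def)
      moreover have "0 \<le> s * (y i * p i)" using hi s by simp
      ultimately have "d i \<le> 0" by simp
      moreover have "u i \<le> u r" using u 3 i by auto
      ultimately show ?thesis by (intro mult_nonpos_nonpos) auto
    qed
  qed
  finally show ?thesis by simp
qed


lemma hi_eq: "(\<Sum>i\<in>{i. i < (n::nat) \<and> 1 < v i}. p i) = (\<Sum>i<n. (if 1 < v i then 1 else 0) * (p i :: real))"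
proof -
  have "(\<Sum>i<n. (if 1 < v i then 1 else 0) * p i) = (\<Sum>i<n. if 1 < v i then p i else 0)"
    by (rule sum.cong) auto
  also have "\<dots> = (\<Sum>i\<in>{i \<in> {..<n}. 1 < v i}. p i)" by (subst sum.inter_filter) auto
  also have "{i \<in> {..<n}. 1 < v i} = {i. i < n \<and> 1 < v i}" by auto
  finally show ?thesis by simp
qed

lemma Y0:
  assumes p: "\<forall>i<n. 0 \<le> p i \<and> p i \<le> 1" and v0: "\<forall>i<n. 0 \<le> v i"
    and mono: "\<forall>i j. i \<le> j \<and> j < n \<longrightarrow> v j \<le> v i"
  shows "\<exists>y0. (\<forall>i<n. 0 \<le> y0 i \<and> y0 i \<le> 1) \<and> (\<Sum>i<n. y0 i * p i) = alg_mass n k p v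
   \<and> (\<forall>y z. feas n k p y z \<longrightarrow> (\<Sum>i<n. v i * p i * y i) + z \<le> (\<Sum>i<n. v i * (y0 i * p i)) + min 0 (real k - alg_mass n k p v))
   \<and> (real k < alg_mass n k p v \<longrightarrow> alg_mass n k p v \<le> (\<Sum>i<n. v i * (y0 i * p i)))"
proof -
  define hi where "hi = (\<Sum>i\<in>{i. i < n \<and> 1 < v i}. p i)"
  define P where "P = (\<Sum>i<n. p i)"
  define yH where "yH i = (if 1 < v i then 1 else 0::real)" for i
  have p0: "\<forall>i<n. 0 \<le> p i" using p by auto
  have hiH: "(\<Sum>i<n. yH i * p i) = hi" by (simp add: hi_def yH_def hi_eq)
  have yHb: "\<forall>i<n. 0 \<le> yH i \<and> yH i \<le> 1" by (simp add: yH_def)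
  have dualH: "(\<Sum>i<n. v i * p i * y i) + z \<le> real k + (\<Sum>i<n. v i * (yH i * p i)) - hi"
    if f: "feas n k p y z" for y z
  proof -
    have "(\<Sum>i<n. v i * p i * y i) + z \<le> 1 * real k + (\<Sum>i<n. p i * max (v i - 1) 0)"
      by (rule dual_bound[OF f p0]) auto
    also have "(\<Sum>i<n. p i * max (v i - 1) 0) = (\<Sum>i<n. v i * (yH i * p i)) - (\<Sum>i<n. yH i * p i)"
      by (subst sum_subtractf[symmetric]) (auto intro!: sum.cong simp: yH_def max_def algebra_simps)
    finally show ?thesis by (simp add: hiH)
  qed
  have VH: "hi \<le> (\<Sum>i<n. v i * (yH i * p i))"
  proof -
    have "(\<Sum>i<n. yH i * p i) \<le> (\<Sum>i<n. v i * (yH i * p i))"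
    proof (rule sum_mono)
      fix i assume "i \<in> {..<n}"
      then have "0 \<le> p i" using p by auto
      show "yH i * p i \<le> v i * (yH i * p i)"
      proof (cases "1 < v i")
        case True
        then have "1 * p i \<le> v i * p i" using \<open>0 \<le> p i\<close> by (intro mult_right_mono) auto
        then show ?thesis using True by (simp add: yH_def)
      qed (simp add: yH_def)
    qed
    then show ?thesis by (simp add: hiH)
  qed
  show ?thesis
  proof (cases "hi \<le> real k")
    case False
    then have am: "alg_mass n k p v = hi" by (simp add: alg_mass_def hi_def)
    show ?thesis
    proof (rule exI[of _ yH], intro conjI allI impI)
      fix y z assume "feas n k p y z"
      from dualH[OF this] show "(\<Sum>i<n. v i * p i * y i) + z \<le> (\<Sum>i<n. v i * (yH i * p i)) + min 0 (real k - alg_mass n k p v)"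
        using False by (simp add: am)
    qed (use yHb hiH VH in \<open>auto simp: am\<close>)
  next
    case hik: True
    then have am: "alg_mass n k p v = min (real k) P" by (simp add: alg_mass_def hi_def P_def)
    show ?thesis
    proof (cases "P < real k")
      case True
      then have am2: "alg_mass n k p v = P" by (simp add: am)
      have d: "(\<Sum>i<n. v i * p i * y i) + z \<le> (\<Sum>i<n. v i * (1 * p i))" if f: "feas n k p y z" for y z
      proof -
        have "(\<Sum>i<n. v i * p i * y i) + z \<le> 0 * real k + (\<Sum>i<n. p i * max (v i - 0) 0)"
          by (rule dual_bound[OF f p0]) auto
        also have "\<dots> = (\<Sum>i<n. v i * (1 * p i))" using v0 by (auto intro!: sum.cong simp: max_def)
        finally show ?thesis .
      qed
      show ?thesis
        apply (rule exI[of _ "\<lambda>_. 1"])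
        using d True by (auto simp: am2 P_def)
    next
      case False
      then have am2: "alg_mass n k p v = real k" by (simp add: am)
      show ?thesis
      proof (cases "hi = real k")
        case True
        show ?thesis
        proof (rule exI[of _ yH], intro conjI allI impI)
          fix y z assume "feas n k p y z"
          from dualH[OF this] show "(\<Sum>i<n. v i * p i * y i) + z \<le> (\<Sum>i<n. v i * (yH i * p i)) + min 0 (real k - alg_mass n k p v)"
            using True by (simp add: am2)
        qed (use yHb hiH True in \<open>auto simp: am2\<close>)
      next
        case hik2: False
        then have hik': "hi < real k" using hik by simp
        obtain y' where y': "prefix_form n y'" "(\<Sum>i<n. y' i * p i) = real k"
          using prefix_exists[OF p0, of "real k"] False by (auto simp: P_def)
        obtain j \<theta> where th: "0 \<le> \<theta>" "\<theta> \<le> 1" and yj: "\<forall>i<n. y' i = (if i < j then 1 else if i = j then \<theta> else 0)"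
          using y'(1) unfolding prefix_form_def by blast
        have yb: "\<forall>i<n. 0 \<le> y' i \<and> y' i \<le> 1" by (rule prefix_bounds[OF y'(1)])
        have bound: "(\<Sum>i<n. v i * p i * y i) + z \<le> (\<Sum>i<n. v i * (y' i * p i))" if f: "feas n k p y z" for y z
        proof (cases "j < n")
          case False
          have "(\<Sum>i<n. v i * p i * y i) + z \<le> 0 * real k + (\<Sum>i<n. p i * max (v i - 0) 0)"
            by (rule dual_bound[OF f p0]) auto
          also have "\<dots> = (\<Sum>i<n. v i * (y' i * p i))" using v0 yj False by (auto intro!: sum.cong simp: max_def)
          finally show ?thesis .
        next
          case jn: True
          have vj: "v j \<le> 1"
          proof (rule ccontr)
            assume "\<not> v j \<le> 1"
            then have "(\<Sum>i<n. y' i * p i) \<le> (\<Sum>i<n. yH i * p i)"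
            proof (intro sum_mono)
              fix i assume "\<not> v j \<le> 1" "i \<in> {..<n}"
              then have i: "i < n" "1 < v j" by auto
              show "y' i * p i \<le> yH i * p i"
              proof (cases "i \<le> j")
                case True
                then have "1 < v i" using mono jn i by (meson less_le_trans)
                then show ?thesis using yb p i by (auto simp: yH_def mult_left_le_one_le)
              next
                case False then show ?thesis using yj i p by (auto simp: yH_def)
              qed
            qed
            then show False using y'(2) hiH hik' by simp
          qed
          have "(\<Sum>i<n. v i * p i * y i) + z \<le> v j * real k + (\<Sum>i<n. p i * max (v i - v j) 0)"
            by (rule dual_bound[OF f p0]) (use v0 jn vj in auto)
          also have "(\<Sum>i<n. p i * max (v i - v j) 0) = (\<Sum>i<n. (v i - v j) * (y' i * p i))"
          proof (rule sum.cong[OF refl])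
            fix i assume "i \<in> {..<n}"
            then have i: "i < n" by simp
            consider "i < j" | "i = j" | "j < i" by linarith
            then show "p i * max (v i - v j) 0 = (v i - v j) * (y' i * p i)"
            proof cases
              case 1
              then have "v j \<le> v i" using mono jn by auto
              then show ?thesis using yj i 1 by (simp add: max_def)
            next
              case 2 then show ?thesis by simp
            next
              case 3
              then have "v i \<le> v j" using mono i by auto
              then show ?thesis using yj i 3 by (simp add: max_def)
            qed
          qed
          also have "(\<Sum>i<n. (v i - v j) * (y' i * p i)) = (\<Sum>i<n. v i * (y' i * p i)) - v j * (\<Sum>i<n. y' i * p i)"
            by (simp add: algebra_simps sum_subtractf sum_distrib_left)
          finally show ?thesis using y'(2) by simp
        qed
        show ?thesis
          apply (rule exI[of _ y'])
          using yb y'(2) bound by (auto simp: am2)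
      qed
    qed
  qed
qed


lemma best_prefix:
  assumes pre: "prefix_form n y'"
  shows "\<exists>m\<le>n. EBI {0..<n} y' D \<le> D {0..<m}"
proof -
  obtain j \<theta> where th: "0 \<le> \<theta>" "\<theta> \<le> 1" and yj: "\<forall>i<n. y' i = (if i < j then 1 else if i = j then \<theta> else 0)"
    using pre unfolding prefix_form_def by blast
  have yb: "\<forall>i<n. 0 \<le> y' i \<and> y' i \<le> 1" by (rule prefix_bounds[OF pre])
  define I where "I = {0..<n}"
  define A where "A = {0..<min j n}"
  define B where "B = {0..<min (Suc j) n}"
  define Dm where "Dm = max (D A) (D B)"
  define w where "w S = (\<Prod>i\<in>S. y' i) * (\<Prod>i\<in>I - S. 1 - y' i)" for S
  have fin: "finite I" by (simp add: I_def)
  have w0: "0 \<le> w S" if "S \<in> Pow I" for S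
    using that yb unfolding w_def by (intro mult_nonneg_nonneg prod_nonneg) (auto simp: I_def)
  have AB: "S = A \<or> S = B" if S: "S \<in> Pow I" and ne: "w S \<noteq> 0" for S
  proof -
    have fS: "finite S" using S fin finite_subset by auto
    have nz1: "\<forall>i\<in>S. y' i \<noteq> 0" using ne fS unfolding w_def by auto
    have nz2: "\<forall>i\<in>I - S. 1 - y' i \<noteq> 0" using ne fin unfolding w_def by auto
    have sub1: "A \<subseteq> S"
    proof
      fix i assume "i \<in> A"
      then have "i < j" "i < n" by (auto simp: A_def)
      then have "y' i = 1" using yj by auto
      then show "i \<in> S" using nz2 \<open>i < n\<close> by (auto simp: I_def)
    qed
    have sub2: "S \<subseteq> B"
    proof
      fix i assume "i \<in> S"
      then have "i < n" "y' i \<noteq> 0" using S nz1 by (auto simp: I_def)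
      then have "i \<le> j" using yj by (cases "i \<le> j") auto
      then show "i \<in> B" using \<open>i < n\<close> by (auto simp: B_def)
    qed
    show ?thesis
    proof (cases "j \<in> S")
      case True
      have "B \<subseteq> S"
      proof
        fix i assume "i \<in> B"
        then have "i < Suc j" by (auto simp: B_def)
        then have "i < j \<or> i = j" by auto
        then show "i \<in> S" using sub1 True \<open>i \<in> B\<close> by (auto simp: A_def B_def)
      qed
      then show ?thesis using sub2 by auto
    next
      case False
      have "S \<subseteq> A"
      proof
        fix i assume "i \<in> S"
        then have "i \<in> B" "i \<noteq> j" using sub2 False by auto
        then show "i \<in> A" by (auto simp: A_def B_def)
      qed
      then show ?thesis using sub1 by auto
    qed
  qed
  have "EBI {0..<n} y' D = (\<Sum>S\<in>Pow I. w S * D S)"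
    by (simp add: EBI_def w_def I_def)
  also have "\<dots> \<le> (\<Sum>S\<in>Pow I. w S * Dm)"
  proof (rule sum_mono)
    fix S assume S: "S \<in> Pow I"
    show "w S * D S \<le> w S * Dm"
    proof (cases "w S = 0")
      case False
      then have "D S \<le> Dm" using AB[OF S] by (auto simp: Dm_def)
      then show ?thesis using w0[OF S] by (intro mult_left_mono)
    qed simp
  qed
  also have "\<dots> = Dm * EBI I y' (\<lambda>_. 1)"
    by (simp add: EBI_def w_def sum_distrib_left mult_ac)
  also have "\<dots> = Dm" using EBI_const[OF fin] by simp
  finally have le: "EBI {0..<n} y' D \<le> Dm" .
  show ?thesis
  proof (cases "D B \<le> D A")
    case True
    then show ?thesis using le by (intro exI[of _ "min j n"]) (auto simp: Dm_def A_def)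
  next
    case False
    then show ?thesis using le by (intro exI[of _ "min (Suc j) n"]) (auto simp: Dm_def B_def)
  qed
qed


lemma num_ineq:
  fixes K :: nat and \<tau> s M V :: real
  assumes t: "0 < \<tau>" "\<tau> \<le> 1" and s: "0 \<le> s" "s \<le> 1" and M: "0 \<le> M" and V: "\<tau> * M \<le> V"
    and VM: "real (Suc K) < M \<Longrightarrow> M \<le> V"
  shows "(s - s / \<tau> + Gc (Suc K) (s * real (Suc K)) / (\<tau> * real (Suc K))) * (V + min 0 (real (Suc K) - M))
     \<le> s * (V - M) + Gc (Suc K) (s * M)"
proof -
  define k where "k = real (Suc K)"
  define E where "E = Gc (Suc K) (s * k)"
  define D where "D = s * k - E"
  have k0: "0 < k" by (simp add: k_def)
  have "E \<le> s * k" unfolding E_def by (rule Gc_le) (use s k0 in simp)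
  then have D0: "0 \<le> D" by (simp add: D_def)
  have alpha: "s - s / \<tau> + E / (\<tau> * k) = s - D / (\<tau> * k)"
    using t k0 by (simp add: D_def field_simps)
  have goal: "(s - D / (\<tau> * k)) * (V + min 0 (k - M)) \<le> s * (V - M) + Gc (Suc K) (s * M)"
  proof (cases "M \<le> k")
    case True
    have sc: "(M / k) * E \<le> Gc (Suc K) (s * M)"
    proof -
      have "(M / k) * Gc (Suc K) (s * k) \<le> Gc (Suc K) ((M / k) * (s * k))"
        by (rule Gc_scale) (use s k0 M True in auto)
      moreover have "(M / k) * (s * k) = s * M" using k0 by simp
      ultimately show ?thesis by (simp add: E_def)
    qed
    have "D * M / k \<le> D * V / (\<tau> * k)"
    proof -
      have "M \<le> V / \<tau>" using V t by (simp add: field_simps)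
      then have "D * M \<le> D * (V / \<tau>)" using D0 by (intro mult_left_mono)
      then have "D * M / k \<le> D * (V / \<tau>) / k" using k0 by (intro divide_right_mono) auto
      also have "D * (V / \<tau>) / k = D * V / (\<tau> * k)" by simp
      finally show ?thesis .
    qed
    moreover have "(M / k) * E = s * M - D * M / k" using k0 by (simp add: D_def field_simps)
    ultimately have "s * V - D * V / (\<tau> * k) \<le> s * (V - M) + Gc (Suc K) (s * M)"
      using sc by (simp add: algebra_simps)
    moreover have "min 0 (k - M) = 0" using True by simp
    ultimately show ?thesis by (simp add: algebra_simps)
  next
    case False
    have VM': "M \<le> V" using VM False by (simp add: k_def)
    have a1: "s - D / (\<tau> * k) \<le> s" using D0 t k0 by simp
    have a2: "(s - D / (\<tau> * k)) * k \<le> E"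
    proof -
      have "D \<le> D / \<tau>" using D0 t by (simp add: field_simps mult_left_le)
      then have "(s - D / (\<tau> * k)) * k = s * k - D / \<tau>" using k0 t by (simp add: field_simps)
      also have "\<dots> \<le> s * k - D" using \<open>D \<le> D / \<tau>\<close> by simp
      finally show ?thesis by (simp add: D_def)
    qed
    have a3: "E \<le> Gc (Suc K) (s * M)"
      unfolding E_def by (rule Gc_mono) (use s k0 False in \<open>auto intro: mult_left_mono\<close>)
    have mn: "min 0 (k - M) = k - M" using False by simp
    have "(s - D / (\<tau> * k)) * (V + min 0 (k - M)) = (s - D / (\<tau> * k)) * (V - M) + (s - D / (\<tau> * k)) * k"
      unfolding mn by (simp add: distrib_left[symmetric])
    also have "\<dots> \<le> s * (V - M) + Gc (Suc K) (s * M)"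
      using a1 a2 a3 VM' by (intro add_mono mult_right_mono) auto
    finally show ?thesis .
  qed
  have "s - s / \<tau> + Gc (Suc K) (s * real (Suc K)) / (\<tau> * real (Suc K)) = s - D / (\<tau> * k)"
    using alpha by (simp only: k_def E_def)
  then show ?thesis using goal by (simp only: k_def)
qed


theorem theorem6p1:
  fixes n k :: nat and p v :: "nat \<Rightarrow> real" and \<tau> :: real
  assumes "0 < \<tau>" and "\<tau> < 1"
    and "1 \<le> k" and "k \<le> n"
    and "\<forall>i<n. 0 \<le> p i \<and> p i \<le> 1"
    and "\<forall>i<n. 0 \<le> v i"
    and "\<forall>i j. i \<le> j \<and> j < n \<longrightarrow> v j \<le> v i"
    and "\<forall>i<n. \<tau> \<le> v i"
  shows "(\<exists>s\<in>{0..1}. (\<exists>y'. alg_offer_vec n k p v s y') \<and>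
           (\<forall>y'. alg_offer_vec n k p v s y' \<longrightarrow>
              policy_reward k p v (indep_offer n y') \<ge> alpha_k_tau k \<tau> * LP_sim n k p v))
       \<and> (\<exists>m\<le>n. det_reward k p v {0..<m} \<ge> alpha_k_tau k \<tau> * OPT_sim n k p v)"
proof -
  note tau0 = assms(1) and tau1 = assms(2) and k1 = assms(3) and kn = assms(4)
    and p = assms(5) and v0 = assms(6) and mono = assms(7) and vtau = assms(8)
  obtain K where K: "k = Suc K" using k1 by (cases k) auto
  have n0: "0 < n" using k1 kn by simp
  have p0: "\<forall>i<n. 0 \<le> p i" using p by auto
  define F where "F s = s - s / \<tau> + pois_min_mean (s * real k) k / (\<tau> * real k)" for s
  have Fc: "F = (\<lambda>s. s - s / \<tau> + Gc k (s * real k) / (\<tau> * real k))"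
    by (rule ext) (simp add: F_def pois_min_mean_Gc)
  have cont: "continuous_on {0..1} F"
    unfolding Fc using tau0 k1 by (auto intro!: continuous_intros continuous_on_compose2[OF Gc_cont[of UNIV k]])
  obtain s0 where s0: "s0 \<in> {0..1}" "\<forall>t\<in>{0..1}. F t \<le> F s0"
    using continuous_attains_sup[OF compact_Icc _ cont] by auto
  have alpha: "alpha_k_tau k \<tau> = F s0"
    unfolding alpha_k_tau_def F_def[symmetric]
    by (rule cSup_eq_maximum) (use s0 in auto)
  have "F 0 = 0" by (simp add: Fc)
  moreover have "F 0 \<le> F s0" using s0(2) by simp
  ultimately have a0: "0 \<le> F s0" by simp
  define M where "M = alg_mass n k p v"
  define P where "P = (\<Sum>i<n. p i)"
  have hi0: "0 \<le> (\<Sum>i\<in>{i. i < n \<and> v i > 1}. p i)" using p by (intro sum_nonneg) auto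
  have hiP: "(\<Sum>i\<in>{i. i < n \<and> v i > 1}. p i) \<le> P"
    unfolding P_def by (rule sum_mono2) (use p in auto)
  have P0: "0 \<le> P" unfolding P_def using p by (intro sum_nonneg) auto
  have M0: "0 \<le> M" and MP: "M \<le> P" using hi0 hiP P0
    by (auto simp: M_def alg_mass_def P_def)
  obtain y0 where y0b: "\<forall>i<n. 0 \<le> y0 i \<and> y0 i \<le> 1" and y0m: "(\<Sum>i<n. y0 i * p i) = M"
    and y0d: "\<forall>y z. feas n k p y z \<longrightarrow> (\<Sum>i<n. v i * p i * y i) + z \<le> (\<Sum>i<n. v i * (y0 i * p i)) + min 0 (real k - M)"
    and y0v: "real k < M \<longrightarrow> M \<le> (\<Sum>i<n. v i * (y0 i * p i))"
    using Y0[OF p v0 mono, of k] unfolding M_def by blast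
  define V0 where "V0 = (\<Sum>i<n. v i * (y0 i * p i))"
  have LPle: "LP_sim n k p v \<le> V0 + min 0 (real k - M)"
    by (rule LP_le) (use y0d in \<open>auto simp: V0_def\<close>)
  have V0t: "\<tau> * M \<le> V0"
  proof -
    have "(\<Sum>i<n. \<tau> * (y0 i * p i)) \<le> V0" unfolding V0_def
      using vtau y0b p by (intro sum_mono mult_right_mono) auto
    moreover have "(\<Sum>i<n. \<tau> * (y0 i * p i)) = \<tau> * M" using y0m by (simp add: sum_distrib_left[symmetric])
    ultimately show ?thesis by simp
  qed
  have main: "F s0 * LP_sim n k p v \<le> policy_reward k p v (indep_offer n y')"
    if y': "alg_offer_vec n k p v s0 y'" for y'
  proof -
    have pre: "prefix_form n y'" and ym: "(\<Sum>i<n. y' i * p i) = s0 * M"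
      using y' by (auto simp: alg_offer_vec_def M_def)
    have yb: "\<forall>i<n. 0 \<le> y' i \<and> y' i \<le> 1" by (rule prefix_bounds[OF pre])
    have qb: "\<forall>i\<in>{0..<n}. 0 \<le> y' i * p i \<and> y' i * p i \<le> 1"
      using yb p by (auto simp: mult_le_one)
    have "policy_reward k p v (indep_offer n y') = EBI {0..<n} y' (\<lambda>S. EBI S p (reward k v))"
      by (simp add: policy_reward_indep[OF yb] det_reward_EBI[abs_def])
    also have "\<dots> = EBI {0..<n} (\<lambda>i. y' i * p i) (reward k v)" by (simp add: EBI_nested)
    also have "\<dots> = (\<Sum>i\<in>{0..<n}. (v i - 1) * (y' i * p i)) + EBI {0..<n} (\<lambda>i. y' i * p i) (\<lambda>A. real (min (card A) k))"
      by (simp add: EBI_reward)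
    finally have R: "policy_reward k p v (indep_offer n y') = (\<Sum>i<n. (v i - 1) * (y' i * p i)) + EBI {0..<n} (\<lambda>i. y' i * p i) (\<lambda>A. real (min (card A) k))"
      by (simp add: atLeast0LessThan)
    have E: "Gc k (s0 * M) \<le> EBI {0..<n} (\<lambda>i. y' i * p i) (\<lambda>A. real (min (card A) k))"
      using EBI_min_ge[OF _ qb, of k] ym by (simp add: atLeast0LessThan pois_min_mean_Gc)
    have conc: "s0 * (\<Sum>i<n. (v i - 1) * (y0 i * p i)) \<le> (\<Sum>i<n. (v i - 1) * (y' i * p i))"
    proof (rule prefix_concave[OF n0 pre y0b p0])
      show "\<forall>i j. i \<le> j \<and> j < n \<longrightarrow> v j - 1 \<le> v i - 1" using mono by auto
    qed (use s0 ym y0m in auto)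
    have "(\<Sum>i<n. (v i - 1) * (y0 i * p i)) = V0 - M"
      by (simp add: V0_def y0m[symmetric] algebra_simps sum_subtractf)
    then have R2: "s0 * (V0 - M) + Gc k (s0 * M) \<le> policy_reward k p v (indep_offer n y')"
      using R E conc by simp
    have "F s0 * (V0 + min 0 (real k - M)) \<le> s0 * (V0 - M) + Gc k (s0 * M)"
    proof -
      have VM: "real (Suc K) < M \<Longrightarrow> M \<le> V0" using y0v by (simp add: V0_def K)
      have "\<tau> \<le> 1" using tau1 by simp
      from num_ineq[OF tau0 this _ _ M0 V0t VM] s0(1)
      show ?thesis unfolding Fc K by auto
    qed
    moreover have "F s0 * LP_sim n k p v \<le> F s0 * (V0 + min 0 (real k - M))"
      by (rule mult_left_mono[OF LPle a0])
    ultimately show ?thesis using R2 by linarith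
  qed
  obtain y' where y': "alg_offer_vec n k p v s0 y'"
  proof -
    have "0 \<le> s0 * M" "s0 * M \<le> (\<Sum>i<n. p i)"
      using s0(1) M0 MP by (auto simp: P_def intro: mult_left_le_one_le order_trans)
    then obtain y where "prefix_form n y" "(\<Sum>i<n. y i * p i) = s0 * M"
      using prefix_exists[OF p0] by blast
    then show ?thesis using that by (auto simp: alg_offer_vec_def M_def)
  qed
  have part1: "\<exists>s\<in>{0..1}. (\<exists>y'. alg_offer_vec n k p v s y') \<and>
           (\<forall>y'. alg_offer_vec n k p v s y' \<longrightarrow>
              policy_reward k p v (indep_offer n y') \<ge> alpha_k_tau k \<tau> * LP_sim n k p v)"
    using s0(1) y' main unfolding alpha by blast
  have pre: "prefix_form n y'" using y' by (simp add: alg_offer_vec_def)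
  obtain m where m: "m \<le> n" "EBI {0..<n} y' (det_reward k p v) \<le> det_reward k p v {0..<m}"
    using best_prefix[OF pre] by blast
  have "F s0 * OPT_sim n k p v \<le> F s0 * LP_sim n k p v"
    by (rule mult_left_mono[OF OPT_le_LP[OF p] a0])
  also have "\<dots> \<le> policy_reward k p v (indep_offer n y')" by (rule main[OF y'])
  also have "\<dots> = EBI {0..<n} y' (det_reward k p v)"
    by (rule policy_reward_indep[OF prefix_bounds[OF pre]])
  also have "\<dots> \<le> det_reward k p v {0..<m}" by (rule m(2))
  finally have part2: "\<exists>m\<le>n. det_reward k p v {0..<m} \<ge> alpha_k_tau k \<tau> * OPT_sim n k p v"
    using m(1) unfolding alpha by blast
  show ?thesis using part1 part2 by blast
qed


end
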